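(* Let $N \ge 1$, $\tau > 0$, $\beta > 0$, $\eta > 0$, and let $I_1, \dots, I_N > 0$. Consider the dynamical system in the variables $R_1,\dots,R_N, G$: \[ \tau \frac{dR_i}{dt} = -R_i + \frac{\beta R_i + I_i}{\eta + G}, \quad i = 1,\dots,N, \qquad \tau \frac{dG}{dt} = -G + \sum_{j=1}^N R_j . \] Let $T = \sum_{j=1}^N I_j$ and define \[ G^* = \frac{(\beta - \eta) + \sqrt{(\eta-\beta)^2 + 4T}}{2}, \qquad R_i^* = \frac{I_i}{\eta - \beta + G^*}, \quad i=1,\dots,N. \] Then $(R_1^*,\dots,R_N^*,G^* )$ is the unique steady state of the system with $G^*>0$, and it is an attractor: every eigenvalue of the Jacobian of the system at this steady state has strictly negative real part, so the steady state is locally asymptotically stable.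
   Context: Here $R_i$ are firing rates of excitatory units, $G$ is the activity of a single inhibitory pool, $I_i$ are external inputs, $\beta$ is the self-excitation strength, $\eta$ is a semi-saturation constant and $\tau$ is a time constant. A steady state is a point where all time derivatives vanish. *)

theory Defs
  imports Complex_Main "HOL-Analysis.Derivative" "Jordan_Normal_Form.Char_Poly"
begin

text \<open>State vector x :: nat \<Rightarrow> real with x i = R_(i+1) for i < N and x N = G.
  The vector field (right-hand side of dx/dt) of the system; coordinates beyond N are unused.\<close>
definition rg_field :: "nat \<Rightarrow> real \<Rightarrow> real \<Rightarrow> real \<Rightarrow> (nat \<Rightarrow> real) \<Rightarrow> (nat \<Rightarrow> real) \<Rightarrow> nat \<Rightarrow> real" where
  "rg_field N \<tau> \<beta> \<eta> I x i =
     (if i < N then (- x i + (\<beta> * x i + I i) / (\<eta> + x N)) / \<tau>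
      else if i = N then (- x N + (\<Sum>j<N. x j)) / \<tau>
      else 0)"

definition steady_state :: "nat \<Rightarrow> real \<Rightarrow> real \<Rightarrow> real \<Rightarrow> (nat \<Rightarrow> real) \<Rightarrow> (nat \<Rightarrow> real) \<Rightarrow> bool" where
  "steady_state N \<tau> \<beta> \<eta> I x \<longleftrightarrow> (\<forall>i\<le>N. rg_field N \<tau> \<beta> \<eta> I x i = 0)"

definition jacobian :: "((nat \<Rightarrow> real) \<Rightarrow> nat \<Rightarrow> real) \<Rightarrow> nat \<Rightarrow> (nat \<Rightarrow> real) \<Rightarrow> real mat" where
  "jacobian F n x = mat n n (\<lambda>(i, j). deriv (\<lambda>t. F (x(j := t)) i) (x j))"

end

theory Submission
  imports Defs
begin

lemma sum_upd_lt:
  fixes x :: "nat \<Rightarrow> real"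
  assumes "j < N"
  shows "(\<Sum>k<N. (x(j:=t)) k) = (\<Sum>k<N. x k) - x j + t"
proof -
  have f: "finite {..<N}" by simp
  have "(\<Sum>k<N. (x(j:=t)) k) = t + (\<Sum>k\<in>{..<N}-{j}. (x(j:=t)) k)"
    using sum.remove[OF f, of j "x(j:=t)"] assms by simp
  also have "(\<Sum>k\<in>{..<N}-{j}. (x(j:=t)) k) = (\<Sum>k\<in>{..<N}-{j}. x k)"
    by (rule sum.cong) auto
  also have "(\<Sum>k<N. x k) = x j + (\<Sum>k\<in>{..<N}-{j}. x k)"
    using sum.remove[OF f, of j x] assms by simp
  ultimately show ?thesis by simp
qed

lemma d1: fixes d \<tau> :: real assumes "d \<noteq> 0" "\<tau> \<noteq> 0"
  shows "((\<lambda>t. (- t + (\<beta> * t + c) / d) / \<tau>) has_real_derivative (-1 + \<beta>/d)/\<tau>) (at y)"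
proof -
  have e: "(\<lambda>t. (- t + (\<beta> * t + c) / d) / \<tau>) = (\<lambda>t. t * ((-1 + \<beta>/d)/\<tau>) + c/d/\<tau>)"
    using assms by (auto simp: fun_eq_iff field_simps)
  show ?thesis unfolding e using assms by (auto intro!: derivative_eq_intros)
qed
lemma d3: fixes e \<tau> :: real assumes "e + y \<noteq> 0" "\<tau> \<noteq> 0"
  shows "((\<lambda>t. (- r + K / (e + t)) / \<tau>) has_real_derivative - (K/(e + y)^2)/\<tau>) (at y)"
proof -
  have h: "((\<lambda>t. K / (e + t)) has_real_derivative - (K/(e + y)^2)) (at y)"
    using assms by (auto intro!: derivative_eq_intros simp: power2_eq_square)
  then have "((\<lambda>t. (- r + K / (e + t)) / \<tau>) has_real_derivative (0 + - (K/(e + y)^2))/\<tau>) (at y)"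
    using DERIV_cdivide[OF DERIV_add[OF DERIV_const[of "- r"] h]] by simp
  then show ?thesis by simp
qed

lemma jac1:
  assumes "i < N" "\<eta> + x N \<noteq> 0" "\<tau> \<noteq> 0"
  shows "deriv (\<lambda>t. rg_field N \<tau> \<beta> \<eta> I (x(i:=t)) i) (x i) = (-1 + \<beta>/(\<eta> + x N))/\<tau>"
proof -
  have e: "(\<lambda>t. rg_field N \<tau> \<beta> \<eta> I (x(i:=t)) i) = (\<lambda>t. (- t + (\<beta> * t + I i) / (\<eta> + x N)) / \<tau>)"
    using assms by (auto simp: rg_field_def)
  have "((\<lambda>t. (- t + (\<beta> * t + I i) / (\<eta> + x N)) / \<tau>) has_real_derivative (-1 + \<beta>/(\<eta> + x N))/\<tau>) (at (x i))"
    using d1[of "\<eta> + x N" \<tau> \<beta> "I i"] assms by simp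
  then show ?thesis unfolding e by (rule DERIV_imp_deriv)
qed

lemma jac2:
  assumes "i < N" "j < N" "j \<noteq> i"
  shows "deriv (\<lambda>t. rg_field N \<tau> \<beta> \<eta> I (x(j:=t)) i) (x j) = 0"
proof -
  have e: "(\<lambda>t. rg_field N \<tau> \<beta> \<eta> I (x(j:=t)) i) = (\<lambda>t. rg_field N \<tau> \<beta> \<eta> I x i)"
    using assms by (auto simp: rg_field_def)
  show ?thesis unfolding e by simp
qed

lemma jac3:
  assumes "i < N" "\<eta> + x N \<noteq> 0" "\<tau> \<noteq> 0"
  shows "deriv (\<lambda>t. rg_field N \<tau> \<beta> \<eta> I (x(N:=t)) i) (x N) = - ((\<beta> * x i + I i)/(\<eta> + x N)^2)/\<tau>"
proof -
  have e: "(\<lambda>t. rg_field N \<tau> \<beta> \<eta> I (x(N:=t)) i) = (\<lambda>t. (- x i + (\<beta> * x i + I i) / (\<eta> + t)) / \<tau>)"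
    using assms by (auto simp: rg_field_def)
  have "((\<lambda>t. (- x i + (\<beta> * x i + I i) / (\<eta> + t)) / \<tau>) has_real_derivative - ((\<beta> * x i + I i)/(\<eta> + x N)^2)/\<tau>) (at (x N))"
    using d3[of \<eta> "x N" \<tau> "x i" "\<beta> * x i + I i"] assms by simp
  then show ?thesis unfolding e by (rule DERIV_imp_deriv)
qed

lemma jac4:
  assumes "j < N" "\<tau> \<noteq> 0"
  shows "deriv (\<lambda>t. rg_field N \<tau> \<beta> \<eta> I (x(j:=t)) N) (x j) = 1/\<tau>"
proof -
  have e: "(\<lambda>t. rg_field N \<tau> \<beta> \<eta> I (x(j:=t)) N) = (\<lambda>t. (- x N + ((\<Sum>k<N. x k) - x j + t)) / \<tau>)"
    apply (rule ext) apply (simp only: rg_field_def sum_upd_lt[OF assms(1)]) using assms by simp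
  have "((\<lambda>t. (- x N + ((\<Sum>k<N. x k) - x j + t)) / \<tau>) has_real_derivative 1/\<tau>) (at (x j))"
    using assms by (auto intro!: derivative_eq_intros)
  then show ?thesis unfolding e by (rule DERIV_imp_deriv)
qed

lemma jac5:
  assumes "\<tau> \<noteq> 0"
  shows "deriv (\<lambda>t. rg_field N \<tau> \<beta> \<eta> I (x(N:=t)) N) (x N) = -1/\<tau>"
proof -
  have e: "(\<lambda>t. rg_field N \<tau> \<beta> \<eta> I (x(N:=t)) N) = (\<lambda>t. (- t + (\<Sum>k<N. x k)) / \<tau>)"
    by (auto simp: rg_field_def)
  have "((\<lambda>t. (- t + (\<Sum>k<N. x k)) / \<tau>) has_real_derivative -1/\<tau>) (at (x N))"
    using assms by (auto intro!: derivative_eq_intros)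
  then show ?thesis unfolding e by (rule DERIV_imp_deriv)
qed

lemma quad_re:
  fixes z :: complex and p q :: real
  assumes "p > 0" "q > 0" "z^2 + p * z + q = 0"
  shows "Re z < 0"
proof -
  obtain x y where z: "z = Complex x y" by (cases z)
  have r: "x^2 - y^2 + p*x + q = 0" and im: "2*x*y + p*y = 0"
    using arg_cong[OF assms(3), of Re] arg_cong[OF assms(3), of Im]
    by (auto simp: z power2_eq_square)
  show ?thesis
  proof (cases "y = 0")
    case True
    then have "x^2 + p*x + q = 0" using r by simp
    then show ?thesis using assms z
      by (smt (verit) mult_nonneg_nonneg zero_le_power2 complex.sel(1))
  next
    case False
    then have "2*x + p = 0" using im by (metis distrib_right mult_eq_0_iff mult.commute)
    then show ?thesis using assms z by simp
  qed
qed

lemma jac_dim[simp]: "dim_row (jacobian F n x) = n" "dim_col (jacobian F n x) = n"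
  by (auto simp: jacobian_def)

theorem theorem2:
  fixes N :: nat and \<tau> \<beta> \<eta> :: real and I :: "nat \<Rightarrow> real"
  assumes "N \<ge> 1" and "\<tau> > 0" and "\<beta> > 0" and "\<eta> > 0"
    and "\<forall>i<N. I i > 0"
  defines "T \<equiv> (\<Sum>j<N. I j)"
  defines "Gs \<equiv> ((\<beta> - \<eta>) + sqrt ((\<eta> - \<beta>)^2 + 4 * T)) / 2"
  defines "xs \<equiv> (\<lambda>i. if i < N then I i / (\<eta> - \<beta> + Gs) else if i = N then Gs else 0)"
  shows "steady_state N \<tau> \<beta> \<eta> I xs \<and> xs N > 0
    \<and> (\<forall>x. steady_state N \<tau> \<beta> \<eta> I x \<and> x N > 0 \<longrightarrow> (\<forall>i\<le>N. x i = xs i))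
    \<and> (\<forall>k. eigenvalue (map_mat complex_of_real (jacobian (rg_field N \<tau> \<beta> \<eta> I) (N + 1) xs)) k
            \<longrightarrow> Re k < 0)"
proof -
  define b where "b = \<beta> - \<eta>"
  define s where "s = sqrt (b^2 + 4*T)"
  have T0: "T > 0" unfolding T_def using assms(1,5) by (intro sum_pos) (auto simp: lessThan_empty_iff)
  have s0: "s \<ge> 0" unfolding s_def using T0 by simp
  have s2: "s^2 = b^2 + 4*T" unfolding s_def using T0 by simp
  have sb: "s > \<bar>b\<bar>"
  proof -
    have "sqrt (b^2) < s" unfolding s_def using T0 by (intro real_sqrt_less_mono) simp
    then show ?thesis by simp
  qed
  have Gs_eq: "Gs = (b + s)/2" unfolding Gs_def b_def s_def by (simp add: power2_commute)
  define D where "D = \<eta> - \<beta> + Gs"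
  have D_eq: "D = (s - b)/2" unfolding D_def Gs_eq b_def by (simp add: field_simps)
  have D0: "D > 0" using sb D_eq by simp
  have G0: "Gs > 0" using sb Gs_eq by simp
  have GD: "Gs * D = T"
  proof -
    have "Gs * D = (s^2 - b^2)/4" unfolding Gs_eq D_eq by (simp add: field_simps power2_eq_square)
    then show ?thesis using s2 by simp
  qed
  have eG: "\<eta> + Gs = D + \<beta>" unfolding D_def by simp
  have eG0: "\<eta> + Gs > 0" using eG D0 assms(3) by simp
  have xsN: "xs N = Gs" unfolding xs_def by simp
  have xsi: "\<And>i. i < N \<Longrightarrow> xs i = I i / D" unfolding xs_def D_def by simp
  have ss: "steady_state N \<tau> \<beta> \<eta> I xs"
    unfolding steady_state_def
  proof (intro allI impI)
    fix i assume i: "i \<le> N"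
    show "rg_field N \<tau> \<beta> \<eta> I xs i = 0"
    proof (cases "i < N")
      case True
      have q1: "\<beta> * (I i / D) + I i = (I i / D) * (D + \<beta>)"
        using D0 by (simp add: field_simps)
      have "D + \<beta> \<noteq> 0" using D0 assms(3) by simp
      then have "- (I i / D) + (\<beta> * (I i / D) + I i) / (D + \<beta>) = 0"
        unfolding q1 by simp
      then show ?thesis using True by (simp add: rg_field_def xsN xsi eG)
    next
      case False
      then have iN: "i = N" using i by simp
      have "(\<Sum>j<N. xs j) = (\<Sum>j<N. I j / D)" by (rule sum.cong) (auto simp: xsi)
      also have "\<dots> = T / D" unfolding T_def by (simp add: sum_divide_distrib)
      also have "\<dots> = Gs" using GD D0 by (simp add: field_simps)
      finally show ?thesis using iN by (simp add: rg_field_def xsN)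
    qed
  qed
  have uniq: "\<forall>x. steady_state N \<tau> \<beta> \<eta> I x \<and> x N > 0 \<longrightarrow> (\<forall>i\<le>N. x i = xs i)"
  proof (rule allI, rule impI)
    fix x assume H: "steady_state N \<tau> \<beta> \<eta> I x \<and> x N > 0"
    define g where "g = x N"
    have g0: "g > 0" using H g_def by simp
    have eg: "\<eta> + g > 0" using g0 assms(4) by simp
    have xi: "\<And>i. i < N \<Longrightarrow> x i * (\<eta> + g - \<beta>) = I i"
    proof -
      fix i assume i: "i < N"
      have "rg_field N \<tau> \<beta> \<eta> I x i = 0" using H i unfolding steady_state_def by simp
      then have "- x i + (\<beta> * x i + I i) / (\<eta> + g) = 0" using i assms(2) by (simp add: rg_field_def g_def)
      then show "x i * (\<eta> + g - \<beta>) = I i" using eg by (simp add: field_simps)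
    qed
    have Dg: "\<eta> + g - \<beta> \<noteq> 0" using xi[of 0] assms(1,5) by fastforce
    have xi2: "\<And>i. i < N \<Longrightarrow> x i = I i / (\<eta> + g - \<beta>)" using xi Dg by (simp add: field_simps)
    have "rg_field N \<tau> \<beta> \<eta> I x N = 0" using H unfolding steady_state_def by simp
    then have "g = (\<Sum>j<N. x j)" using assms(2) by (simp add: rg_field_def g_def)
    also have "\<dots> = (\<Sum>j<N. I j / (\<eta> + g - \<beta>))" by (rule sum.cong) (auto simp: xi2)
    also have "\<dots> = T / (\<eta> + g - \<beta>)" unfolding T_def by (simp add: sum_divide_distrib)
    finally have "g * (\<eta> + g - \<beta>) = T" using Dg by (simp add: field_simps)
    then have "(g - Gs) * (g + Gs - b) = 0" using GD unfolding D_def b_def by (simp add: algebra_simps)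
    moreover have "g + Gs - b > 0" using g0 D0 D_eq Gs_eq by simp
    ultimately have gG: "g = Gs" by simp
    show "\<forall>i\<le>N. x i = xs i"
    proof (intro allI impI)
      fix i assume "i \<le> N"
      then consider "i < N" | "i = N" by linarith
      then show "x i = xs i"
      proof cases
        case 1 then show ?thesis using gG g_def xi2[OF 1] xsi[OF 1] D_def by simp
      next
        case 2 then show ?thesis using gG g_def xsN by simp
      qed
    qed
  qed
  have tne: "\<tau> \<noteq> 0" using assms(2) by simp
  define a where "a = -1 + \<beta> / (\<eta> + Gs)"
  define c where "c = (\<lambda>i. - ((\<beta> * xs i + I i) / (\<eta> + Gs)^2))"
  define Jf where "Jf = (\<lambda>i j. if i < N then (if j = i then a/\<tau> else if j = N then c i/\<tau> else 0)
      else (if j < N then 1/\<tau> else -1/\<tau>))"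
  define J where "J = jacobian (rg_field N \<tau> \<beta> \<eta> I) (N + 1) xs"
  have Jent: "\<And>i j. i < N+1 \<Longrightarrow> j < N+1 \<Longrightarrow> J $$ (i,j) = Jf i j"
  proof -
    fix i j assume i: "i < N+1" and j: "j < N+1"
    have "J $$ (i,j) = deriv (\<lambda>t. rg_field N \<tau> \<beta> \<eta> I (xs(j := t)) i) (xs j)"
      unfolding J_def jacobian_def using i j by simp
    also have "\<dots> = Jf i j"
    proof -
      consider "i < N" "j < N" "j = i" | "i < N" "j < N" "j \<noteq> i" | "i < N" "j = N"
        | "i = N" "j < N" | "i = N" "j = N" using i j by linarith
      then show ?thesis
      proof cases
        case 1 then show ?thesis using jac1[of i N \<eta> xs \<tau> \<beta> I] eG0 tne by (simp add: Jf_def a_def xsN)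
      next
        case 2 then show ?thesis using jac2[of i N j \<tau> \<beta> \<eta> I xs] tne by (simp add: Jf_def)
      next
        case 3 then show ?thesis using jac3[of i N \<eta> xs \<tau> \<beta> I] eG0 tne by (simp add: Jf_def c_def xsN)
      next
        case 4 then show ?thesis using jac4[of j N \<tau> \<beta> \<eta> I xs] tne by (simp add: Jf_def)
      next
        case 5 then show ?thesis using tne by (simp add: Jf_def jac5)
      qed
    qed
    finally show "J $$ (i,j) = Jf i j" .
  qed
  have a0: "a < 0"
  proof -
    have "a = - D / (D + \<beta>)" unfolding a_def eG using D0 assms(3) by (simp add: field_simps)
    then show ?thesis using D0 assms(3) by simp
  qed
  have c0: "\<And>i. i < N \<Longrightarrow> c i < 0"
  proof -
    fix i assume i: "i < N"
    have "xs i > 0" using xsi[OF i] assms(5) i D0 by simp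
    then have "\<beta> * xs i + I i > 0" using assms(3,5) i by (simp add: add_pos_pos)
    then show "c i < 0" unfolding c_def using eG0 by simp
  qed
  have eig: "\<forall>k. eigenvalue (map_mat complex_of_real J) k \<longrightarrow> Re k < 0"
  proof (intro allI impI)
    fix k assume "eigenvalue (map_mat complex_of_real J) k"
    then obtain v where v: "v \<in> carrier_vec (N+1)" and vnz: "v \<noteq> 0\<^sub>v (N+1)"
      and ev: "map_mat complex_of_real J *\<^sub>v v = k \<cdot>\<^sub>v v"
      unfolding eigenvalue_def eigenvector_def J_def by auto
    have dv: "dim_vec v = N+1" using v by simp
    have row: "\<And>i. i < N+1 \<Longrightarrow> (\<Sum>j<N+1. complex_of_real (Jf i j) * v$j) = k * v$i"
    proof -
      fix i assume i: "i < N+1"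
      have "(map_mat complex_of_real J *\<^sub>v v) $ i = k * v$i" using ev i dv by (simp add: J_def)
      moreover have "(map_mat complex_of_real J *\<^sub>v v) $ i = (\<Sum>j<N+1. complex_of_real (Jf i j) * v$j)"
      proof -
        have dJ: "dim_row J = N+1" "dim_col J = N+1" unfolding J_def by simp_all
        have "(map_mat complex_of_real J *\<^sub>v v) $ i = (\<Sum>j\<in>{0..<N+1}. complex_of_real (J$$(i,j)) * v$j)"
          using i dv dJ by (simp add: scalar_prod_def)
        also have "\<dots> = (\<Sum>j<N+1. complex_of_real (Jf i j) * v$j)"
          unfolding atLeast0LessThan using i by (intro sum.cong) (auto simp: Jent)
        finally show ?thesis .
      qed
      ultimately show "(\<Sum>j<N+1. complex_of_real (Jf i j) * v$j) = k * v$i" by simp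
    qed
    define \<mu> where "\<mu> = complex_of_real \<tau> * k"
    have t0: "complex_of_real \<tau> \<noteq> 0" using assms(2) by simp
    have rowi: "\<And>i. i < N \<Longrightarrow> (\<mu> - a) * v$i = c i * v$N"
    proof -
      fix i assume i: "i < N"
      have "(\<Sum>j<N. complex_of_real (Jf i j) * v$j) = (\<Sum>j<N. if j = i then complex_of_real (a/\<tau>) * v$j else 0)"
        by (rule sum.cong) (auto simp: Jf_def i)
      also have "\<dots> = complex_of_real (a/\<tau>) * v$i" using i by simp
      finally have "complex_of_real (a/\<tau>) * v$i + complex_of_real (c i/\<tau>) * v$N = k * v$i"
        using row[of i] i by (simp add: Jf_def)
      then have "complex_of_real a * v$i + complex_of_real (c i) * v$N = complex_of_real \<tau> * k * v$i"
        using t0 by (simp add: field_simps)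
      then show "(\<mu> - a) * v$i = c i * v$N" unfolding \<mu>_def by (simp add: algebra_simps)
    qed
    have rowN: "(\<Sum>j<N. v$j) - v$N = \<mu> * v$N"
    proof -
      have "(\<Sum>j<N. complex_of_real (Jf N j) * v$j) = (\<Sum>j<N. v$j) / complex_of_real \<tau>"
        by (simp add: Jf_def sum_divide_distrib)
      then have "(\<Sum>j<N. v$j) / complex_of_real \<tau> - v$N / complex_of_real \<tau> = k * v$N"
        using row[of N] by (simp add: Jf_def)
      then show ?thesis unfolding \<mu>_def using t0 by (simp add: field_simps)
    qed
    have "Re \<mu> < 0"
    proof (cases "v$N = 0")
      case True
      obtain i where i: "i < N+1" "v$i \<noteq> 0"
        using vnz v by (metis carrier_vecD eq_vecI index_zero_vec(1) index_zero_vec(2))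
      then have iN: "i < N" using True by (cases "i = N") auto
      then have "\<mu> = a" using rowi[OF iN] True i by simp
      then show ?thesis using a0 by simp
    next
      case False
      have N0: "0 < N" using assms(1) by simp
      have ma: "\<mu> - a \<noteq> 0"
      proof
        assume "\<mu> - a = 0"
        then have "c 0 * v$N = 0" using rowi[OF N0] by simp
        then show False using c0[OF N0] False by simp
      qed
      have vj: "\<And>j. j < N \<Longrightarrow> v$j = c j * v$N / (\<mu> - a)"
        using rowi ma by (simp add: field_simps)
      define S where "S = (\<Sum>j<N. c j)"
      have S0: "S < 0" 
      proof -
        have "(\<Sum>j<N. - c j) > 0" using c0 N0 by (intro sum_pos) (auto simp: lessThan_empty_iff)
        then show ?thesis unfolding S_def by (simp add: sum_negf)
      qed
      have "(\<Sum>j<N. v$j) = complex_of_real S * v$N / (\<mu> - a)"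
        by (simp add: vj S_def sum_divide_distrib sum_distrib_right)
      then have "complex_of_real S * v$N / (\<mu> - a) - v$N = \<mu> * v$N" using rowN by simp
      then have "complex_of_real S * v$N = (\<mu> + 1) * (\<mu> - a) * v$N" using ma by (simp add: field_simps)
      then have "complex_of_real S = (\<mu> + 1) * (\<mu> - a)" using False by simp
      then have "\<mu>^2 + complex_of_real (1 - a) * \<mu> + complex_of_real (- a - S) = 0"
        by (simp add: algebra_simps power2_eq_square)
      then show ?thesis by (rule quad_re[rotated 2]) (use a0 S0 in auto)
    qed
    moreover have "k = \<mu> / complex_of_real \<tau>" unfolding \<mu>_def using t0 by simp
    ultimately show "Re k < 0" using assms(2) by (simp add: Re_divide_of_real divide_neg_pos)
  qed
  show ?thesis using ss uniq eig G0 xsN unfolding J_def by simp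
qed
end
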